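(* Let $f(x)=\frac1n\sum_{i=1}^n f_i(x)$ on $\mathbb{R}^d$, where each $f_i$ is convex, lower bounded and $L_i$-smooth, and let $x^*$ be a minimizer of $f$. Consider SGD with the DecSPS stepsize (defined in the context) with $c_k=\sqrt{k+1}$ for $k\ge0$ and $c_{-1}=c_0$. Then for every $K\ge1$, $$\mathbb{E}[f(\bar x^K)-f(x^* )]\le\frac{2\tilde L D^2+2\hat\sigma_B^2}{\sqrt K},$$ where $D^2:=\max_{k\in[K-1]}\|x^k-x^*\|^2$, $\tilde L:=\max\{\max_iL_i,\frac{1}{2c_0\gamma_b}\}$ and $\bar x^K=\frac1K\sum_{k=0}^{K-1}x^k$.
   Context: Minibatches: fix a batch size $B$; at each iteration $k$ a subset $\mathcal S_k\subseteq[n]$ with $|\mathcal S_k|=B$ is sampled uniformly at random, independently across iterations. For $\mathcal S\subseteq[n]$, $f_{\mathcal S}:=\frac1{|\mathcal S|}\sum_{i\in\mathcal S}f_i$, $f^*_{\mathcal S}:=\inf_xf_{\mathcal S}(x)$, and $\ell^*_{\mathcal S}$ is a given real number with $\ell^*_{\mathcal S}\le f^*_{\mathcal S}$. SGD: $x^{k+1}=x^k-\gamma_k\nabla f_{\mathcal S_k}(x^k)$. DecSPS stepsize: $\gamma_k:=\frac1{c_k}\min\left\{\frac{f_{\mathcal S_k}(x^k)-\ell^*_{\mathcal S_k}}{\|\nabla f_{\mathcal S_k}(x^k)\|^2},\ c_{k-1}\gamma_{k-1}\right\}$ for $k\ge0$, with $c_{-1}=c_0$ and $\gamma_{-1}=\gamma_b>0$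 a fixed constant; if $\nabla f_{\mathcal S_k}(x^k)=0$ the iterate is not updated. $\hat\sigma_B^2:=\mathbb{E}_{\mathcal S}[f_{\mathcal S}(x^* )-\ell^*_{\mathcal S}]$ with $\mathcal S$ uniform over subsets of size $B$. $[K-1]$ denotes $\{0,\dots,K-1\}$. *)

theory Defs
  imports "HOL-Analysis.Analysis" "HOL-Probability.Probability"
begin

text \<open>Components are indexed by 0..<n (the paper uses 1..n).\<close>

definition favg :: "(nat \<Rightarrow> 'a \<Rightarrow> real) \<Rightarrow> nat \<Rightarrow> 'a \<Rightarrow> real" where
  "favg f n x = (\<Sum>i<n. f i x) / real n"

definition fS :: "(nat \<Rightarrow> 'a \<Rightarrow> real) \<Rightarrow> nat set \<Rightarrow> 'a \<Rightarrow> real" where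
  "fS f S x = (\<Sum>i\<in>S. f i x) / real (card S)"

definition gS :: "(nat \<Rightarrow> 'a \<Rightarrow> 'a::real_vector) \<Rightarrow> nat set \<Rightarrow> 'a \<Rightarrow> 'a" where
  "gS g S x = (1 / real (card S)) *\<^sub>R (\<Sum>i\<in>S. g i x)"

definition batches :: "nat \<Rightarrow> nat \<Rightarrow> nat set set" where
  "batches n B = {S. S \<subseteq> {0..<n} \<and> card S = B}"

text \<open>Sample space for K iterations: independent uniform batches S_0..S_{K-1}.\<close>
definition samples :: "nat \<Rightarrow> nat \<Rightarrow> nat \<Rightarrow> (nat \<Rightarrow> nat set) set" where
  "samples n B K = {0..<K} \<rightarrow>\<^sub>E batches n B"

text \<open>DecSPS parameters c_k = sqrt(k+1); c_{k-1} at k = 0 is c_0 by nat subtraction.\<close>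
definition cdec :: "nat \<Rightarrow> real" where
  "cdec k = sqrt (real k + 1)"

text \<open>State after k steps: (x^k, gamma_{k-1}), with gamma_{-1} = gb.
  If the minibatch gradient vanishes, the Polyak ratio is read as +infinity,
  so gamma_k = c_{k-1} gamma_{k-1} / c_k and the iterate is not moved.\<close>
fun decsps :: "(nat \<Rightarrow> 'a \<Rightarrow> real) \<Rightarrow> (nat \<Rightarrow> 'a \<Rightarrow> 'a::real_inner) \<Rightarrow> (nat set \<Rightarrow> real)
    \<Rightarrow> real \<Rightarrow> 'a \<Rightarrow> (nat \<Rightarrow> nat set) \<Rightarrow> nat \<Rightarrow> 'a \<times> real" where
  "decsps f g ell gb x0 Ss 0 = (x0, gb)"
| "decsps f g ell gb x0 Ss (Suc k) =
    (let (x, gprev) = decsps f g ell gb x0 Ss k;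
         S = Ss k;
         gr = gS g S x;
         gam = (1 / cdec k) *
               (if gr = 0 then cdec (k - 1) * gprev
                else min ((fS f S x - ell S) / (norm gr)\<^sup>2) (cdec (k - 1) * gprev))
     in (x - gam *\<^sub>R gr, gam))"

definition iterate :: "(nat \<Rightarrow> 'a \<Rightarrow> real) \<Rightarrow> (nat \<Rightarrow> 'a \<Rightarrow> 'a::real_inner) \<Rightarrow> (nat set \<Rightarrow> real)
    \<Rightarrow> real \<Rightarrow> 'a \<Rightarrow> (nat \<Rightarrow> nat set) \<Rightarrow> nat \<Rightarrow> 'a" where
  "iterate f g ell gb x0 Ss k = fst (decsps f g ell gb x0 Ss k)"

end

theory Submission
  imports Defs
begin



lemma line_deriv:
  fixes F :: "'a::real_inner \<Rightarrow> real"
  assumes "\<And>y. (F has_derivative (\<lambda>h. G y \<bullet> h)) (at y)"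
  shows "((\<lambda>t. F (x + t *\<^sub>R d)) has_real_derivative (G (x + t *\<^sub>R d) \<bullet> d)) (at t)"
proof -
  have 1: "((\<lambda>t. x + t *\<^sub>R d) has_derivative (\<lambda>h. h *\<^sub>R d)) (at t)"
    by (auto intro!: derivative_eq_intros)
  have "((\<lambda>t. F (x + t *\<^sub>R d)) has_derivative (\<lambda>h. G (x + t *\<^sub>R d) \<bullet> (h *\<^sub>R d))) (at t)"
    by (rule has_derivative_compose[OF 1 assms])
  moreover have "(\<lambda>h. G (x + t *\<^sub>R d) \<bullet> (h *\<^sub>R d)) = (*) (G (x + t *\<^sub>R d) \<bullet> d)"
    by (auto simp: inner_scaleR_right)
  ultimately show ?thesis unfolding has_field_derivative_def by simp
qed

lemma grad_ineq:
  fixes F :: "'a::real_inner \<Rightarrow> real"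
  assumes d: "\<And>y. (F has_derivative (\<lambda>h. G y \<bullet> h)) (at y)"
    and c: "convex_on UNIV F"
  shows "F y \<ge> F x + G x \<bullet> (y - x)"
proof -
  let ?p = "\<lambda>t. F (x + t *\<^sub>R (y - x))"
  have cp: "convex_on UNIV ?p"
  proof (rule convex_onI)
    fix t u :: real and a b :: real assume "0 < t" "t < 1"
    have "x + ((1 - t) * a + t * b) *\<^sub>R (y - x) = (1 - t) *\<^sub>R (x + a *\<^sub>R (y - x)) + t *\<^sub>R (x + b *\<^sub>R (y - x))"
      by (simp add: algebra_simps)
    then show "?p ((1 - t) *\<^sub>R a + t *\<^sub>R b) \<le> (1 - t) * ?p a + t * ?p b"
      using convex_onD[OF c, of t "x + a *\<^sub>R (y - x)" "x + b *\<^sub>R (y - x)"] \<open>0<t\<close> \<open>t<1\<close> by simp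
  qed simp
  have "?p 1 - ?p 0 \<ge> (G (x + 0 *\<^sub>R (y - x)) \<bullet> (y - x)) * (1 - 0)"
    using line_deriv[OF d, where x=x and t=0 and d="y - x"]
    by (intro convex_on_imp_above_tangent[OF cp]) (auto intro: has_field_derivative_at_within)
  then show ?thesis by simp
qed

lemma descent:
  fixes F :: "'a::real_inner \<Rightarrow> real"
  assumes d: "\<And>y. (F has_derivative (\<lambda>h. G y \<bullet> h)) (at y)"
    and lip: "\<And>x y. norm (G x - G y) \<le> L * norm (x - y)"
  shows "F y \<le> F x + G x \<bullet> (y - x) + L / 2 * (norm (y - x))\<^sup>2"
proof -
  define dd where "dd = y - x"
  let ?h = "\<lambda>t. F (x + t *\<^sub>R dd) - F x - t * (G x \<bullet> dd) - L / 2 * t\<^sup>2 * (norm dd)\<^sup>2"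
  have "?h 0 \<ge> ?h 1"
  proof (rule DERIV_nonpos_imp_nonincreasing[where f = ?h])
    fix t :: real assume t: "0 \<le> t" "t \<le> 1"
    have "(?h has_real_derivative (G (x + t *\<^sub>R dd) \<bullet> dd - G x \<bullet> dd - L / 2 * (2 * t) * (norm dd)\<^sup>2)) (at t)"
      by (auto intro!: derivative_eq_intros line_deriv[OF d])
    moreover have "G (x + t *\<^sub>R dd) \<bullet> dd - G x \<bullet> dd - L / 2 * (2 * t) * (norm dd)\<^sup>2 \<le> 0"
    proof -
      have "G (x + t *\<^sub>R dd) \<bullet> dd - G x \<bullet> dd = (G (x + t *\<^sub>R dd) - G x) \<bullet> dd"
        by (simp add: inner_diff_left)
      also have "\<dots> \<le> norm (G (x + t *\<^sub>R dd) - G x) * norm dd"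
        by (rule norm_cauchy_schwarz)
      also have "\<dots> \<le> (L * norm (t *\<^sub>R dd)) * norm dd"
        using lip[of "x + t *\<^sub>R dd" x] by (intro mult_right_mono) auto
      also have "\<dots> = L * t * (norm dd)\<^sup>2" using t by (simp add: power2_eq_square)
      finally show ?thesis by simp
    qed
    ultimately show "\<exists>y. DERIV ?h t :> y \<and> y \<le> 0" by blast
  qed simp
  then show ?thesis by (simp add: dd_def)
qed



lemma card_batches_i:
  assumes "i < n" "1 \<le> B"
  shows "card {S \<in> batches n B. i \<in> S} = (n - 1) choose (B - 1)"
proof -
  have eq: "{S \<in> batches n B. i \<in> S} = insert i ` {T. T \<subseteq> {0..<n} - {i} \<and> card T = B - 1}"
  proof
    show "{S \<in> batches n B. i \<in> S} \<subseteq> insert i ` {T. T \<subseteq> {0..<n} - {i} \<and> card T = B - 1}"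
    proof
      fix S assume S: "S \<in> {S \<in> batches n B. i \<in> S}"
      then have fin: "finite S" by (auto simp: batches_def intro: finite_subset)
      have "S = insert i (S - {i})" using S by auto
      moreover have "S - {i} \<in> {T. T \<subseteq> {0..<n} - {i} \<and> card T = B - 1}"
        using S fin by (auto simp: batches_def)
      ultimately show "S \<in> insert i ` {T. T \<subseteq> {0..<n} - {i} \<and> card T = B - 1}" by blast
    qed
  next
    show "insert i ` {T. T \<subseteq> {0..<n} - {i} \<and> card T = B - 1} \<subseteq> {S \<in> batches n B. i \<in> S}"
    proof
      fix S assume "S \<in> insert i ` {T. T \<subseteq> {0..<n} - {i} \<and> card T = B - 1}"
      then obtain T where T: "T \<subseteq> {0..<n} - {i}" "card T = B - 1" "S = insert i T" by auto
      have "finite T" using T(1) by (auto intro: finite_subset)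
      moreover have "i \<notin> T" using T(1) by auto
      ultimately have "card S = B" using T assms by auto
      then show "S \<in> {S \<in> batches n B. i \<in> S}" using T assms by (auto simp: batches_def)
    qed
  qed
  have inj: "inj_on (insert i) {T. T \<subseteq> {0..<n} - {i} \<and> card T = B - 1}"
    by (rule inj_onI) blast
  have "card {S \<in> batches n B. i \<in> S} = card {T. T \<subseteq> {0..<n} - {i} \<and> card T = B - 1}"
    unfolding eq by (rule card_image[OF inj])
  also have "\<dots> = card ({0..<n} - {i}) choose (B - 1)" by (rule n_subsets) auto
  also have "card ({0..<n} - {i}) = n - 1" using assms by simp
  finally show ?thesis .
qed

lemma card_batches: "card (batches n B) = n choose B"
  unfolding batches_def by (subst n_subsets) auto

lemma finite_batches: "finite (batches n B)"
  unfolding batches_def by (rule finite_subset[of _ "Pow {0..<n}"]) auto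

lemma batches_ne: assumes "B \<le> n" shows "batches n B \<noteq> {}"
proof -
  obtain S where "S \<subseteq> {0..<n}" "card S = B" using obtain_subset_with_card_n[of B "{0..<n}"] assms by auto
  then show ?thesis by (auto simp: batches_def)
qed

lemma batch_avg:
  assumes "1 \<le> B" "B \<le> n"
  shows "(\<Sum>S\<in>batches n B. fS f S x) = real (card (batches n B)) * favg f n x"
proof -
  have "(\<Sum>S\<in>batches n B. fS f S x) = (\<Sum>S\<in>batches n B. (\<Sum>i\<in>{i\<in>{0..<n}. i \<in> S}. f i x)) / real B"
    unfolding fS_def sum_divide_distrib
    by (intro sum.cong refl) (auto simp: batches_def intro!: sum.cong arg_cong2[where f="(/)"] arg_cong[where f=real])
  also have "(\<Sum>S\<in>batches n B. (\<Sum>i\<in>{i\<in>{0..<n}. i \<in> S}. f i x)) = (\<Sum>i\<in>{0..<n}. \<Sum>S\<in>{S\<in>batches n B. i \<in> S}. f i x)"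
    by (rule sum.swap_restrict) (auto simp: finite_batches)
  also have "\<dots> = (\<Sum>i\<in>{0..<n}. real ((n - 1) choose (B - 1)) * f i x)"
    using assms by (intro sum.cong refl) (simp add: card_batches_i)
  finally have 1: "(\<Sum>S\<in>batches n B. fS f S x) = real ((n - 1) choose (B - 1)) * (\<Sum>i<n. f i x) / real B"
    by (simp add: sum_distrib_left atLeast0LessThan)
  obtain m b where mb: "n = Suc m" "B = Suc b" using assms by (cases n; cases B) auto
  have key: "real B * real (n choose B) = real n * real ((n - 1) choose (B - 1))"
    using Suc_times_binomial[of b m] mb by (metis diff_Suc_1 of_nat_mult)
  show ?thesis unfolding 1 favg_def card_batches using key mb
  proof -
    have "real n * real ((n - 1) choose (B - 1)) * (\<Sum>i<n. f i x) / real B / real n = real (n choose B) * (\<Sum>i<n. f i x) / real n"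
      unfolding key[symmetric] using mb by simp
    then show "real ((n - 1) choose (B - 1)) * (\<Sum>i<n. f i x) / real B = real (n choose B) * ((\<Sum>i<n. f i x) / real n)"
      using mb by simp
  qed
qed

lemma sum_PiE_split:
  fixes u :: "(nat \<Rightarrow> 'b) \<Rightarrow> real"
  assumes "finite I" "k \<in> I" "finite A"
  shows "(\<Sum>Ss\<in>Pi\<^sub>E I (\<lambda>_. A). u Ss) = (\<Sum>S\<in>A. \<Sum>T\<in>Pi\<^sub>E (I - {k}) (\<lambda>_. A). u (T(k := S)))"
proof -
  have I: "I = insert k (I - {k})" using assms by auto
  have "(\<Sum>Ss\<in>Pi\<^sub>E I (\<lambda>_. A). u Ss) = (\<Sum>Ss\<in>Pi\<^sub>E (insert k (I - {k})) (\<lambda>_. A). u Ss)"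
    using I by simp
  also have "\<dots> = (\<Sum>p\<in>A \<times> Pi\<^sub>E (I - {k}) (\<lambda>_. A). u ((\<lambda>(y, g). g(k := y)) p))"
    unfolding PiE_insert_eq by (subst sum.reindex) (auto intro: inj_combinator[of k "I - {k}" "\<lambda>_. A", simplified])
  also have "\<dots> = (\<Sum>S\<in>A. \<Sum>T\<in>Pi\<^sub>E (I - {k}) (\<lambda>_. A). u (T(k := S)))"
    by (simp add: sum.cartesian_product split_beta)
  finally show ?thesis .
qed



lemma lin_aux: fixes q A Bv F Fs G Lh r T :: real shows "q \<le> A + Bv \<Longrightarrow> F - Fs \<le> G \<Longrightarrow> Lh = r - 2 * G + q \<Longrightarrow> T = 2 * (F - Fs) - A \<Longrightarrow> Lh \<le> r - T + Bv"
  by (smt (verit))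

lemma one_step:
  fixes x xs g x' :: "'a::real_inner"
  assumes gam: "gam > 0" and c: "c \<ge> 1" and l: "l \<le> Fs" and cv: "Fs \<ge> F + g \<bullet> (xs - x)"
    and z: "g = 0 \<Longrightarrow> x' = x"
    and nz: "g \<noteq> 0 \<Longrightarrow> x' = x - gam *\<^sub>R g \<and> gam \<le> (1 / c) * ((F - l) / (norm g)\<^sup>2)"
  shows "(norm (x' - xs))\<^sup>2 / gam \<le> (norm (x - xs))\<^sup>2 / gam - (2 - 1 / c) * (F - Fs) + (Fs - l) / c"
proof (cases "g = 0")
  case True
  then have "F - Fs \<le> 0" using cv by simp
  moreover have "2 - 1 / c \<ge> 0" using c by (simp add: field_simps)
  ultimately have "(2 - 1 / c) * (F - Fs) \<le> 0" by (simp add: mult_nonneg_nonpos)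
  moreover have "(Fs - l) / c \<ge> 0" using l c by simp
  ultimately show ?thesis using z[OF True] by simp
next
  case False
  then have x': "x' = x - gam *\<^sub>R g" and gle: "gam \<le> (1 / c) * ((F - l) / (norm g)\<^sup>2)" using nz by auto
  have ng: "(norm g)\<^sup>2 > 0" using False by simp
  have cpos: "c > 0" using c by simp
  have e: "(norm (x' - xs))\<^sup>2 = (norm (x - xs))\<^sup>2 - 2 * gam * (g \<bullet> (x - xs)) + gam\<^sup>2 * (norm g)\<^sup>2"
  proof -
    have xe: "x' - xs = (x - xs) - gam *\<^sub>R g" using x' by simp
    have ne: "(norm (u - gam *\<^sub>R g))\<^sup>2 = (norm u)\<^sup>2 - 2 * gam * (g \<bullet> u) + gam\<^sup>2 * (norm g)\<^sup>2" for u
      by (simp add: power2_norm_eq_inner inner_diff_left inner_diff_right inner_commute algebra_simps power2_eq_square[of gam])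
    show ?thesis unfolding xe by (rule ne)
  qed
  have f1: "gam * (norm g)\<^sup>2 \<le> (F - l) / c"
  proof -
    have "gam * (norm g)\<^sup>2 \<le> (1 / c) * ((F - l) / (norm g)\<^sup>2) * (norm g)\<^sup>2"
      using gle ng by (intro mult_right_mono) auto
    also have "\<dots> = (F - l) / c" using ng by simp
    finally show ?thesis .
  qed
  have f2: "g \<bullet> (x - xs) \<ge> F - Fs"
  proof -
    have "g \<bullet> (xs - x) = - (g \<bullet> (x - xs))" by (simp add: inner_diff_right)
    then show ?thesis using cv by simp
  qed
  have f3: "(norm (x' - xs))\<^sup>2 / gam = (norm (x - xs))\<^sup>2 / gam - 2 * (g \<bullet> (x - xs)) + gam * (norm g)\<^sup>2"
    unfolding e using gam by (simp add: field_simps power2_eq_square)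
  have f4: "(F - l) / c = (F - Fs) / c + (Fs - l) / c" unfolding add_divide_distrib[symmetric] by simp
  have f5: "(2 - 1 / c) * (F - Fs) = 2 * (F - Fs) - (F - Fs) / c" by (simp add: left_diff_distrib)
  show ?thesis using lin_aux[OF f1[unfolded f4] f2 f3 f5] .
qed

lemma telescope:
  fixes r gam :: "nat \<Rightarrow> real"
  assumes "\<And>k. k < m \<Longrightarrow> gam (Suc k) \<le> gam k" "\<And>k. k \<le> m \<Longrightarrow> gam k > 0" "\<And>k. k \<le> m \<Longrightarrow> r k \<le> D"
  shows "(\<Sum>k<Suc m. (r k - r (Suc k)) / gam k) \<le> (D - r (Suc m)) / gam m"
  using assms
proof (induction m)
  case 0
  then have "r 0 \<le> D" "gam 0 > 0" by auto
  then show ?case by (simp add: divide_right_mono)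
next
  case (Suc m)
  have IH: "(\<Sum>k<Suc m. (r k - r (Suc k)) / gam k) \<le> (D - r (Suc m)) / gam m"
    using Suc by auto
  have "(D - r (Suc m)) / gam m \<le> (D - r (Suc m)) / gam (Suc m)"
    using Suc.prems by (intro divide_left_mono) auto
  then have "(D - r (Suc m)) / gam m + (r (Suc m) - r (Suc (Suc m))) / gam (Suc m) \<le> (D - r (Suc (Suc m))) / gam (Suc m)"
    by (simp add: diff_divide_distrib)
  then show ?case using IH by simp
qed

lemma sum_inv_sqrt: "(\<Sum>k<K. 1 / cdec k) \<le> 2 * sqrt (real K)"
proof (induction K)
  case 0 then show ?case by simp
next
  case (Suc K)
  have "1 / sqrt (real K + 1) \<le> 2 * sqrt (real K + 1) - 2 * sqrt (real K)"
  proof -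
    have s: "sqrt (real K) * sqrt (real K + 1) \<le> real K + 1 / 2"
    proof -
      have "sqrt (real K) * sqrt (real K + 1) = sqrt (real K * (real K + 1))" by (simp add: real_sqrt_mult)
      also have "\<dots> \<le> sqrt ((real K + 1/2)\<^sup>2)" by (intro real_sqrt_le_mono) (simp add: power2_eq_square algebra_simps)
      also have "\<dots> = real K + 1/2" by simp
      finally show ?thesis .
    qed
    have p: "sqrt (real K + 1) > 0" by simp
    have "1 \<le> 2 * (sqrt (real K + 1))\<^sup>2 - 2 * sqrt (real K) * sqrt (real K + 1)"
      using s by simp
    then have "1 \<le> (2 * sqrt (real K + 1) - 2 * sqrt (real K)) * sqrt (real K + 1)"
      by (simp add: algebra_simps power2_eq_square)
    then show ?thesis using p by (simp add: field_simps)
  qed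
  moreover have "(\<Sum>k<Suc K. 1 / cdec k) = (\<Sum>k<K. 1 / cdec k) + 1 / sqrt (real K + 1)"
    by (simp add: cdec_def)
  moreover have "sqrt (real (Suc K)) = sqrt (real K + 1)" by simp
  ultimately show ?case using Suc by linarith
qed



definition Ltil :: "(nat \<Rightarrow> real) \<Rightarrow> nat \<Rightarrow> real \<Rightarrow> real" where
  "Ltil L n gb = max (Max (L ` {0..<n})) (1 / (2 * cdec 0 * gb))"

declare decsps.simps(2)[simp del]

lemma cdec_pos: "cdec k > 0" by (simp add: cdec_def)
lemma cdec_ge1: "cdec k \<ge> 1" by (simp add: cdec_def)
lemma cdec_0: "cdec 0 = 1" by (simp add: cdec_def)
lemma cdec_mono: "k \<le> m \<Longrightarrow> cdec k \<le> cdec m" by (simp add: cdec_def)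

context
  fixes f :: "nat \<Rightarrow> 'a::euclidean_space \<Rightarrow> real" and g :: "nat \<Rightarrow> 'a \<Rightarrow> 'a"
    and L :: "nat \<Rightarrow> real" and ell :: "nat set \<Rightarrow> real"
    and n B :: nat and gb :: real and x0 xs :: 'a
  assumes B1: "1 \<le> B" and Bn: "B \<le> n"
    and grad: "\<And>i x. i < n \<Longrightarrow> (f i has_derivative (\<lambda>h. g i x \<bullet> h)) (at x)"
    and conv: "\<And>i. i < n \<Longrightarrow> convex_on UNIV (f i)"
    and lb: "\<And>i. i < n \<Longrightarrow> bdd_below (range (f i))"
    and smooth: "\<And>i x y. i < n \<Longrightarrow> norm (g i x - g i y) \<le> L i * norm (x - y)"
    and opt: "\<And>x. favg f n xs \<le> favg f n x"
    and ell: "\<And>S. S \<in> batches n B \<Longrightarrow> ell S \<le> (INF x. fS f S x)"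
    and gbpos: "gb > 0"
begin

lemma Lt_pos: "Ltil L n gb > 0"
  unfolding Ltil_def cdec_0 using gbpos by (simp add: max.strict_coboundedI2)

lemma L_le: "i < n \<Longrightarrow> L i \<le> Ltil L n gb"
  unfolding Ltil_def by (rule max.coboundedI1) (rule Max_ge, auto)

lemma batchD: "S \<in> batches n B \<Longrightarrow> card S = B \<and> S \<subseteq> {0..<n} \<and> finite S \<and> S \<noteq> {}"
  using B1 by (auto simp: batches_def intro: finite_subset)

lemma gS_inner: "gS g S x \<bullet> d = (\<Sum>i\<in>S. g i x \<bullet> d) / real (card S)"
  by (simp add: gS_def inner_sum_left)

lemma fS_conv:
  assumes S: "S \<in> batches n B"
  shows "fS f S y \<ge> fS f S x + gS g S x \<bullet> (y - x)"
proof -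
  have cS: "real (card S) > 0" using batchD[OF S] B1 by simp
  have "(\<Sum>i\<in>S. f i x + g i x \<bullet> (y - x)) \<le> (\<Sum>i\<in>S. f i y)"
  proof (rule sum_mono)
    fix i assume "i \<in> S"
    then have i: "i < n" using batchD[OF S] by auto
    show "f i x + g i x \<bullet> (y - x) \<le> f i y"
      by (rule grad_ineq[OF grad[OF i] conv[OF i]])
  qed
  then have "(\<Sum>i\<in>S. f i x + g i x \<bullet> (y - x)) / real (card S) \<le> (\<Sum>i\<in>S. f i y) / real (card S)"
    using cS by (intro divide_right_mono) auto
  then show ?thesis unfolding fS_def gS_inner by (simp add: sum.distrib add_divide_distrib)
qed

lemma fS_desc:
  assumes S: "S \<in> batches n B"
  shows "fS f S y \<le> fS f S x + gS g S x \<bullet> (y - x) + Ltil L n gb / 2 * (norm (y - x))\<^sup>2"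
proof -
  have cS: "real (card S) > 0" using batchD[OF S] B1 by simp
  have "(\<Sum>i\<in>S. f i y) \<le> (\<Sum>i\<in>S. f i x + g i x \<bullet> (y - x) + Ltil L n gb / 2 * (norm (y - x))\<^sup>2)"
  proof (rule sum_mono)
    fix i assume "i \<in> S"
    then have i: "i < n" using batchD[OF S] by auto
    have "f i y \<le> f i x + g i x \<bullet> (y - x) + L i / 2 * (norm (y - x))\<^sup>2"
      by (rule descent[OF grad[OF i] smooth[OF i]])
    also have "\<dots> \<le> f i x + g i x \<bullet> (y - x) + Ltil L n gb / 2 * (norm (y - x))\<^sup>2"
      using L_le[OF i] by (intro add_left_mono mult_right_mono divide_right_mono) auto
    finally show "f i y \<le> f i x + g i x \<bullet> (y - x) + Ltil L n gb / 2 * (norm (y - x))\<^sup>2" .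
  qed
  then have "(\<Sum>i\<in>S. f i y) / real (card S) \<le> (\<Sum>i\<in>S. f i x + g i x \<bullet> (y - x) + Ltil L n gb / 2 * (norm (y - x))\<^sup>2) / real (card S)"
    using cS by (intro divide_right_mono) auto
  also have "\<dots> = fS f S x + gS g S x \<bullet> (y - x) + Ltil L n gb / 2 * (norm (y - x))\<^sup>2"
    unfolding fS_def gS_inner using cS by (simp add: sum.distrib add_divide_distrib)
  finally show ?thesis unfolding fS_def .
qed

lemma fS_bdd:
  assumes S: "S \<in> batches n B"
  shows "bdd_below (range (fS f S))"
proof -
  have "\<forall>i. \<exists>M. i < n \<longrightarrow> (\<forall>x. M \<le> f i x)"
    using lb by (metis bdd_below.E rangeI)
  then obtain m where m: "\<And>i x. i < n \<Longrightarrow> m i \<le> f i x" by metis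
  have cS: "real (card S) > 0" using batchD[OF S] B1 by simp
  show ?thesis
  proof (rule bdd_belowI2)
    fix x
    have "(\<Sum>i\<in>S. m i) \<le> (\<Sum>i\<in>S. f i x)"
      using batchD[OF S] by (intro sum_mono m) auto
    then show "(\<Sum>i\<in>S. m i) / real (card S) \<le> fS f S x"
      unfolding fS_def using cS by (intro divide_right_mono) auto
  qed
qed

lemma ell_le: "S \<in> batches n B \<Longrightarrow> ell S \<le> fS f S y"
  using ell[of S] cINF_lower[OF fS_bdd, of S y] by auto

lemma ratio:
  assumes S: "S \<in> batches n B" and nz: "gS g S x \<noteq> 0"
  shows "1 / (2 * Ltil L n gb) \<le> (fS f S x - ell S) / (norm (gS g S x))\<^sup>2"
proof -
  define Lt where "Lt = Ltil L n gb"
  define v where "v = gS g S x"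
  have Lt: "Lt > 0" using Lt_pos by (simp add: Lt_def)
  have nv: "(norm v)\<^sup>2 > 0" using nz by (simp add: v_def)
  define y where "y = x - (1 / Lt) *\<^sub>R v"
  have nn: "v \<bullet> v = norm v * norm v" by (metis power2_eq_square power2_norm_eq_inner)
  have "ell S \<le> fS f S y" by (rule ell_le[OF S])
  also have "\<dots> \<le> fS f S x + v \<bullet> (y - x) + Lt / 2 * (norm (y - x))\<^sup>2"
    using fS_desc[OF S, of y x] by (simp add: Lt_def v_def)
  also have "\<dots> = fS f S x - (norm v)\<^sup>2 / (2 * Lt)"
    using Lt nn by (simp add: y_def power2_norm_eq_inner power2_eq_square field_simps)
  finally have "(norm v)\<^sup>2 / (2 * Lt) \<le> fS f S x - ell S" by simp
  then show ?thesis using nv Lt by (simp add: field_simps v_def Lt_def)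
qed


lemma Gam_Suc: "snd (decsps f g ell gb x0 Ss (Suc k)) = (1 / cdec k) *
   (if gS g (Ss k) (fst (decsps f g ell gb x0 Ss k)) = 0 then cdec (k - 1) * snd (decsps f g ell gb x0 Ss k)
    else min ((fS f (Ss k) (fst (decsps f g ell gb x0 Ss k)) - ell (Ss k)) / (norm (gS g (Ss k) (fst (decsps f g ell gb x0 Ss k))))\<^sup>2)
             (cdec (k - 1) * snd (decsps f g ell gb x0 Ss k)))"
  by (cases "decsps f g ell gb x0 Ss k") (simp add: Let_def decsps.simps(2))

lemma X_Suc: "fst (decsps f g ell gb x0 Ss (Suc k)) = fst (decsps f g ell gb x0 Ss k)
   - snd (decsps f g ell gb x0 Ss (Suc k)) *\<^sub>R gS g (Ss k) (fst (decsps f g ell gb x0 Ss k))"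
  by (cases "decsps f g ell gb x0 Ss k") (simp add: Let_def decsps.simps(2))

lemma P_inv:
  assumes "k \<le> K" and Ss: "\<And>j. j < K \<Longrightarrow> Ss j \<in> batches n B"
  shows "1 / (2 * Ltil L n gb) \<le> cdec (k - 1) * snd (decsps f g ell gb x0 Ss k)"
  using assms(1)
proof (induction k)
  case 0
  have "1 / (2 * gb) \<le> Ltil L n gb" unfolding Ltil_def cdec_0 by simp
  then have "1 \<le> 2 * gb * Ltil L n gb" using gbpos Lt_pos by (simp add: field_simps)
  then show ?case using gbpos Lt_pos by (simp add: cdec_0 field_simps)
next
  case (Suc k)
  let ?x = "fst (decsps f g ell gb x0 Ss k)"
  have IH: "1 / (2 * Ltil L n gb) \<le> cdec (k - 1) * snd (decsps f g ell gb x0 Ss k)" using Suc by simp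
  have S: "Ss k \<in> batches n B" using Suc.prems Ss by simp
  have e: "cdec k * snd (decsps f g ell gb x0 Ss (Suc k)) =
    (if gS g (Ss k) ?x = 0 then cdec (k - 1) * snd (decsps f g ell gb x0 Ss k)
    else min ((fS f (Ss k) ?x - ell (Ss k)) / (norm (gS g (Ss k) ?x))\<^sup>2)
             (cdec (k - 1) * snd (decsps f g ell gb x0 Ss k)))"
    unfolding Gam_Suc using cdec_pos[of k] by simp
  show ?case unfolding diff_Suc_1 e using IH ratio[OF S, of ?x] by auto
qed

lemma Gam_pos:
  assumes "k \<le> K" and Ss: "\<And>j. j < K \<Longrightarrow> Ss j \<in> batches n B"
  shows "snd (decsps f g ell gb x0 Ss k) > 0"
proof -
  have "0 < cdec (k - 1) * snd (decsps f g ell gb x0 Ss k)"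
    using P_inv[where K=K and Ss=Ss, OF assms] Lt_pos by (smt (verit) divide_pos_pos)
  then show ?thesis using cdec_pos[of "k - 1"] by (simp add: zero_less_mult_iff)
qed

lemma Gam_le: "snd (decsps f g ell gb x0 Ss (Suc k)) \<le> (1 / cdec k) * (cdec (k - 1) * snd (decsps f g ell gb x0 Ss k))"
  unfolding Gam_Suc using cdec_pos[of k] divide_right_mono[OF min.cobounded2, of "cdec k"] by auto

lemma Gam_mono:
  assumes "Suc k \<le> K" and Ss: "\<And>j. j < K \<Longrightarrow> Ss j \<in> batches n B"
  shows "snd (decsps f g ell gb x0 Ss (Suc k)) \<le> snd (decsps f g ell gb x0 Ss k)"
proof -
  have p: "snd (decsps f g ell gb x0 Ss k) > 0" using Gam_pos[where K=K and Ss=Ss, OF _ Ss] assms(1) by simp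
  have "cdec (k - 1) * snd (decsps f g ell gb x0 Ss k) \<le> cdec k * snd (decsps f g ell gb x0 Ss k)"
    using p by (intro mult_right_mono cdec_mono) auto
  then have "(1 / cdec k) * (cdec (k - 1) * snd (decsps f g ell gb x0 Ss k)) \<le> snd (decsps f g ell gb x0 Ss k)"
    using cdec_pos[of k] by (simp add: field_simps)
  then show ?thesis using Gam_le[of Ss k] by linarith
qed

lemma pointwise:
  assumes K: "K \<ge> 1" and Ss: "\<And>j. j < K \<Longrightarrow> Ss j \<in> batches n B"
  shows "(\<Sum>k<K. (2 - 1 / cdec k) * (fS f (Ss k) (iterate f g ell gb x0 Ss k) - fS f (Ss k) xs))
     \<le> 2 * cdec (K - 1) * Ltil L n gb * Max ((\<lambda>k. (norm (iterate f g ell gb x0 Ss k - xs))\<^sup>2) ` {..<K})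
       + (\<Sum>k<K. (fS f (Ss k) xs - ell (Ss k)) / cdec k)"
proof -
  define X where "X k = fst (decsps f g ell gb x0 Ss k)" for k
  define G where "G k = snd (decsps f g ell gb x0 Ss (Suc k))" for k
  define r where "r k = (norm (X k - xs))\<^sup>2" for k
  define D where "D = Max (r ` {..<K})"
  define a where "a k = fS f (Ss k) (X k) - fS f (Ss k) xs" for k
  define sg where "sg k = fS f (Ss k) xs - ell (Ss k)" for k
  have it: "iterate f g ell gb x0 Ss k = X k" for k by (simp add: iterate_def X_def)
  have step: "(2 - 1 / cdec k) * a k \<le> (r k - r (Suc k)) / G k + sg k / cdec k" if k: "k < K" for k
  proof -
    have S: "Ss k \<in> batches n B" using Ss k .
    have "(norm (X (Suc k) - xs))\<^sup>2 / G k \<le> (norm (X k - xs))\<^sup>2 / G k - (2 - 1 / cdec k) * (fS f (Ss k) (X k) - fS f (Ss k) xs)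
        + (fS f (Ss k) xs - ell (Ss k)) / cdec k"
    proof (rule one_step)
      show "G k > 0" unfolding G_def using Gam_pos[where K=K and Ss=Ss, OF _ Ss, of "Suc k"] k by simp
      show "cdec k \<ge> 1" by (rule cdec_ge1)
      show "ell (Ss k) \<le> fS f (Ss k) xs" by (rule ell_le[OF S])
      show "fS f (Ss k) xs \<ge> fS f (Ss k) (X k) + gS g (Ss k) (X k) \<bullet> (xs - X k)" by (rule fS_conv[OF S])
      show "X (Suc k) = X k" if "gS g (Ss k) (X k) = 0" using that unfolding X_def using X_Suc[of Ss k] by simp
      show "X (Suc k) = X k - G k *\<^sub>R gS g (Ss k) (X k) \<and> G k \<le> 1 / cdec k * ((fS f (Ss k) (X k) - ell (Ss k)) / (norm (gS g (Ss k) (X k)))\<^sup>2)"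
        if nz: "gS g (Ss k) (X k) \<noteq> 0"
      proof
        show "X (Suc k) = X k - G k *\<^sub>R gS g (Ss k) (X k)" unfolding X_def G_def by (rule X_Suc)
        have Ge: "G k = (1 / cdec k) * min ((fS f (Ss k) (X k) - ell (Ss k)) / (norm (gS g (Ss k) (X k)))\<^sup>2) (cdec (k - 1) * snd (decsps f g ell gb x0 Ss k))"
          using nz unfolding G_def X_def Gam_Suc by simp
        show "G k \<le> 1 / cdec k * ((fS f (Ss k) (X k) - ell (Ss k)) / (norm (gS g (Ss k) (X k)))\<^sup>2)"
          unfolding Ge by (rule mult_left_mono[OF min.cobounded1]) (simp add: cdec_pos less_imp_le)
      qed
    qed
    then have "(2 - 1 / cdec k) * a k \<le> r k / G k - r (Suc k) / G k + sg k / cdec k"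
      unfolding r_def a_def sg_def by linarith
    then show ?thesis by (simp add: diff_divide_distrib)
  qed
  obtain m where m: "K = Suc m" using K by (cases K) auto
  have rD: "r k \<le> D" if "k < K" for k unfolding D_def using that by (intro Max_ge) auto
  have r0: "r 0 \<ge> 0" unfolding r_def by simp
  have "r 0 \<le> D" using K by (intro rD) auto
  with r0 have D0: "D \<ge> 0" by linarith
  have "(\<Sum>k<K. (2 - 1 / cdec k) * a k) \<le> (\<Sum>k<K. (r k - r (Suc k)) / G k + sg k / cdec k)"
    by (rule sum_mono) (use step in auto)
  also have "\<dots> = (\<Sum>k<Suc m. (r k - r (Suc k)) / G k) + (\<Sum>k<K. sg k / cdec k)"
    by (simp add: sum.distrib m)
  also have "(\<Sum>k<Suc m. (r k - r (Suc k)) / G k) \<le> (D - r (Suc m)) / G m"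
  proof (rule telescope)
    show "G (Suc k) \<le> G k" if "k < m" for k unfolding G_def using Gam_mono[where K=K and Ss=Ss, OF _ Ss, of "Suc k"] that m by simp
    show "G k > 0" if "k \<le> m" for k unfolding G_def using Gam_pos[where K=K and Ss=Ss, OF _ Ss, of "Suc k"] that m by simp
    show "r k \<le> D" if "k \<le> m" for k using rD that m by simp
  qed
  also have "(D - r (Suc m)) / G m \<le> D / G m"
    using Gam_pos[where K=K and Ss=Ss, OF _ Ss, of "Suc m"] m unfolding G_def r_def by (intro divide_right_mono) auto
  also have "D / G m \<le> 2 * cdec (K - 1) * Ltil L n gb * D"
  proof -
    have P: "1 / (2 * Ltil L n gb) \<le> cdec m * G m" using P_inv[where K=K and Ss=Ss, OF _ Ss, of K] m unfolding G_def by simp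
    have Gp: "G m > 0" unfolding G_def using Gam_pos[where K=K and Ss=Ss, OF _ Ss, of "Suc m"] m by simp
    have "1 \<le> 2 * Ltil L n gb * cdec m * G m" using P Lt_pos by (simp add: field_simps)
    then have "1 / G m \<le> 2 * cdec m * Ltil L n gb" using Gp by (simp add: field_simps)
    then have "D * (1 / G m) \<le> D * (2 * cdec m * Ltil L n gb)" using D0 by (intro mult_left_mono) auto
    then show ?thesis using m by (simp add: mult.commute)
  qed
  finally show ?thesis unfolding it a_def sg_def r_def D_def by simp
qed


lemma iter_dep: "(\<And>j. j < k \<Longrightarrow> Ss j = Ss' j) \<Longrightarrow> decsps f g ell gb x0 Ss k = decsps f g ell gb x0 Ss' k"
  by (induction k) (simp_all add: decsps.simps(2))

lemma favg_conv: "convex_on UNIV (favg f n)"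
proof (rule convex_onI)
  fix t :: real and x y :: 'a assume t: "0 < t" "t < 1"
  have "(\<Sum>i<n. f i ((1 - t) *\<^sub>R x + t *\<^sub>R y)) \<le> (\<Sum>i<n. (1 - t) * f i x + t * f i y)"
    using t by (intro sum_mono convex_onD[OF conv]) auto
  then have "(\<Sum>i<n. f i ((1 - t) *\<^sub>R x + t *\<^sub>R y)) / real n \<le> (\<Sum>i<n. (1 - t) * f i x + t * f i y) / real n"
    by (intro divide_right_mono) auto
  then show "favg f n ((1 - t) *\<^sub>R x + t *\<^sub>R y) \<le> (1 - t) * favg f n x + t * favg f n y"
    unfolding favg_def by (simp add: sum.distrib sum_distrib_left[symmetric] add_divide_distrib)
qed simp

lemma jensen:
  assumes K: "K \<ge> 1"
  shows "favg f n ((1 / real K) *\<^sub>R (\<Sum>k<K. X k)) - favg f n xs \<le> (1 / real K) * (\<Sum>k<K. favg f n (X k) - favg f n xs)"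
proof -
  have "favg f n (\<Sum>k<K. (1 / real K) *\<^sub>R X k) \<le> (\<Sum>k<K. (1 / real K) * favg f n (X k))"
  proof -
    have ne: "0 \<in> {..<K}" using K by simp
    have K0: "real K \<noteq> 0" using K by simp
    show ?thesis by (rule convex_on_sum[OF _ _ favg_conv]) (use ne K0 in auto)
  qed
  then show ?thesis using K
    by (simp add: scaleR_sum_right sum_subtractf sum_distrib_left[symmetric] right_diff_distrib sum_divide_distrib)
qed

lemma main:
  assumes K: "K \<ge> 1"
  shows "measure_pmf.expectation (pmf_of_set (samples n B K))
           (\<lambda>Ss. favg f n ((1 / real K) *\<^sub>R (\<Sum>k<K. iterate f g ell gb x0 Ss k)) - favg f n xs)
         \<le> (2 * max (Max (L ` {0..<n})) (1 / (2 * cdec 0 * gb))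
              * measure_pmf.expectation (pmf_of_set (samples n B K))
                  (\<lambda>Ss. Max ((\<lambda>k. (norm (iterate f g ell gb x0 Ss k - xs))\<^sup>2) ` {..<K}))
            + 2 * measure_pmf.expectation (pmf_of_set (batches n B)) (\<lambda>S. fS f S xs - ell S))
           / sqrt (real K)"
proof -
  define Sm where "Sm = samples n B K"
  define Bt where "Bt = batches n B"
  define PT where "PT k = Pi\<^sub>E ({0..<K} - {k}) (\<lambda>_. Bt)" for k
  define N where "N = real (card Sm)"
  define Lt where "Lt = Ltil L n gb"
  define X where "X Ss k = iterate f g ell gb x0 Ss k" for Ss k
  define fa where "fa x = favg f n x" for x
  define sg where "sg S = fS f S xs - ell S" for S
  define sh where "sh = (\<Sum>S\<in>Bt. sg S) / real (card Bt)"
  define Dm where "Dm Ss = Max ((\<lambda>k. (norm (X Ss k - xs))\<^sup>2) ` {..<K})" for Ss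
  define e where "e k = (\<Sum>Ss\<in>Sm. fa (X Ss k) - fa xs)" for k
  have finBt: "finite Bt" unfolding Bt_def by (rule finite_batches)
  have Btne: "Bt \<noteq> {}" unfolding Bt_def by (rule batches_ne[OF Bn])
  have cBt: "real (card Bt) > 0" using finBt Btne by (simp add: card_gt_0_iff)
  have SmPi: "Sm = Pi\<^sub>E {0..<K} (\<lambda>_. Bt)" unfolding Sm_def samples_def Bt_def by simp
  have finSm: "finite Sm" unfolding SmPi using finBt by (intro finite_PiE) auto
  have Smne: "Sm \<noteq> {}" unfolding SmPi using Btne by (simp add: PiE_eq_empty_iff)
  have Npos: "N > 0" unfolding N_def using finSm Smne by (simp add: card_gt_0_iff)
  have memSm: "Ss j \<in> Bt" if "Ss \<in> Sm" "j < K" for Ss j using that unfolding SmPi by auto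
  have E: "measure_pmf.expectation (pmf_of_set A) h = sum h A / real (card A)" if "finite A" "A \<noteq> {}" for A :: "'b set" and h
    using that by (simp add: integral_pmf_of_set)
  have XT: "X (T(k := S)) k = X T k" for T S k
    unfolding X_def iterate_def by (rule arg_cong[OF iter_dep]) auto
  have split: "(\<Sum>Ss\<in>Sm. u Ss) = (\<Sum>S\<in>Bt. \<Sum>T\<in>PT k. u (T(k := S)))" if "k < K" for u :: "(nat \<Rightarrow> nat set) \<Rightarrow> real" and k
    unfolding SmPi PT_def using that finBt by (intro sum_PiE_split) auto
  have claimA: "(\<Sum>Ss\<in>Sm. fS f (Ss k) (X Ss k) - fS f (Ss k) xs) = e k" if k: "k < K" for k
  proof -
    have "(\<Sum>Ss\<in>Sm. fS f (Ss k) (X Ss k) - fS f (Ss k) xs) = (\<Sum>S\<in>Bt. \<Sum>T\<in>PT k. fS f S (X T k) - fS f S xs)"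
      unfolding split[OF k] by (simp add: XT)
    also have "\<dots> = (\<Sum>T\<in>PT k. \<Sum>S\<in>Bt. fS f S (X T k) - fS f S xs)" by (rule sum.swap)
    also have "\<dots> = (\<Sum>T\<in>PT k. real (card Bt) * (fa (X T k) - fa xs))"
      by (intro sum.cong refl) (simp add: sum_subtractf Bt_def fa_def batch_avg[OF B1 Bn] right_diff_distrib)
    also have "\<dots> = (\<Sum>S\<in>Bt. \<Sum>T\<in>PT k. fa (X T k) - fa xs)"
      by (simp add: sum_distrib_left[symmetric])
    also have "\<dots> = e k" unfolding e_def split[OF k] by (simp add: XT)
    finally show ?thesis .
  qed
  have claimB: "(\<Sum>Ss\<in>Sm. sg (Ss k)) = N * sh" if k: "k < K" for k
  proof -
    have "(\<Sum>Ss\<in>Sm. sg (Ss k)) = (\<Sum>S\<in>Bt. \<Sum>T\<in>PT k. sg S)" unfolding split[OF k] by simp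
    also have "\<dots> = real (card (PT k)) * (\<Sum>S\<in>Bt. sg S)" by (simp add: sum_distrib_left)
    finally have 1: "(\<Sum>Ss\<in>Sm. sg (Ss k)) = real (card (PT k)) * (\<Sum>S\<in>Bt. sg S)" .
    have "N = (\<Sum>Ss\<in>Sm. 1)" unfolding N_def by simp
    also have "\<dots> = (\<Sum>S\<in>Bt. \<Sum>T\<in>PT k. 1)" unfolding split[OF k] by simp
    also have "\<dots> = real (card Bt) * real (card (PT k))" by simp
    finally have "N = real (card Bt) * real (card (PT k))" .
    then show ?thesis unfolding 1 sh_def using cBt by simp
  qed
  have sh0: "sh \<ge> 0" unfolding sh_def sg_def Bt_def
    by (intro divide_nonneg_nonneg sum_nonneg) (auto simp: ell_le)
  have e0: "e k \<ge> 0" for k unfolding e_def fa_def using opt by (intro sum_nonneg) auto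
  have pw: "(\<Sum>k<K. (2 - 1 / cdec k) * (fS f (Ss k) (X Ss k) - fS f (Ss k) xs))
     \<le> 2 * cdec (K - 1) * Lt * Dm Ss + (\<Sum>k<K. sg (Ss k) / cdec k)" if "Ss \<in> Sm" for Ss
    using pointwise[OF K, of Ss] memSm[OF that] unfolding X_def Dm_def Lt_def sg_def Bt_def by blast
  have "(\<Sum>Ss\<in>Sm. \<Sum>k<K. (2 - 1 / cdec k) * (fS f (Ss k) (X Ss k) - fS f (Ss k) xs))
     \<le> (\<Sum>Ss\<in>Sm. 2 * cdec (K - 1) * Lt * Dm Ss + (\<Sum>k<K. sg (Ss k) / cdec k))"
    by (rule sum_mono) (rule pw)
  moreover have "(\<Sum>Ss\<in>Sm. \<Sum>k<K. (2 - 1 / cdec k) * (fS f (Ss k) (X Ss k) - fS f (Ss k) xs))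
      = (\<Sum>k<K. (2 - 1 / cdec k) * e k)"
    by (subst sum.swap) (simp add: sum_distrib_left[symmetric] claimA)
  moreover have "(\<Sum>Ss\<in>Sm. 2 * cdec (K - 1) * Lt * Dm Ss + (\<Sum>k<K. sg (Ss k) / cdec k))
      = 2 * cdec (K - 1) * Lt * (\<Sum>Ss\<in>Sm. Dm Ss) + N * sh * (\<Sum>k<K. 1 / cdec k)"
  proof -
    have "(\<Sum>Ss\<in>Sm. \<Sum>k<K. sg (Ss k) / cdec k) = (\<Sum>k<K. (\<Sum>Ss\<in>Sm. sg (Ss k)) / cdec k)"
      by (subst sum.swap) (simp add: sum_divide_distrib)
    also have "\<dots> = (\<Sum>k<K. N * sh * (1 / cdec k))" by (intro sum.cong) (auto simp: claimB)
    finally show ?thesis by (simp add: sum.distrib sum_distrib_left)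
  qed
  ultimately have 1: "(\<Sum>k<K. (2 - 1 / cdec k) * e k) \<le> 2 * cdec (K - 1) * Lt * (\<Sum>Ss\<in>Sm. Dm Ss) + N * sh * (\<Sum>k<K. 1 / cdec k)"
    by simp
  have "(\<Sum>k<K. e k) \<le> (\<Sum>k<K. (2 - 1 / cdec k) * e k)"
  proof (rule sum_mono)
    fix k
    have "1 / cdec k \<le> 1" using cdec_ge1[of k] by simp
    then have "1 \<le> 2 - 1 / cdec k" by simp
    then show "e k \<le> (2 - 1 / cdec k) * e k" using e0[of k] by (simp add: mult_le_cancel_right1)
  qed
  also note 1
  also have "N * sh * (\<Sum>k<K. 1 / cdec k) \<le> N * sh * (2 * sqrt (real K))"
    using Npos sh0 sum_inv_sqrt[of K] by (intro mult_left_mono) auto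
  finally have 2: "(\<Sum>k<K. e k) \<le> 2 * sqrt (real K) * Lt * (\<Sum>Ss\<in>Sm. Dm Ss) + N * sh * (2 * sqrt (real K))"
    using K by (simp add: cdec_def)
  have "(\<Sum>Ss\<in>Sm. fa ((1 / real K) *\<^sub>R (\<Sum>k<K. X Ss k)) - fa xs) \<le> (\<Sum>Ss\<in>Sm. (1 / real K) * (\<Sum>k<K. fa (X Ss k) - fa xs))"
    unfolding fa_def by (intro sum_mono jensen K)
  also have "\<dots> = (1 / real K) * (\<Sum>k<K. e k)"
    unfolding e_def by (subst sum.swap) (simp add: sum_distrib_left)
  finally have 3: "(\<Sum>Ss\<in>Sm. fa ((1 / real K) *\<^sub>R (\<Sum>k<K. X Ss k)) - fa xs) \<le> (1 / real K) * (\<Sum>k<K. e k)" .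
  define s where "s = sqrt (real K)"
  have s: "s > 0" "s * s = real K" using K by (auto simp: s_def)
  define SD where "SD = (\<Sum>Ss\<in>Sm. Dm Ss)"
  define EL where "EL = (\<Sum>Ss\<in>Sm. fa ((1 / real K) *\<^sub>R (\<Sum>k<K. X Ss k)) - fa xs)"
  define Es where "Es = (\<Sum>k<K. e k)"
  have 2: "Es \<le> 2 * s * Lt * SD + N * sh * (2 * s)" using 2 unfolding Es_def SD_def s_def .
  have 3: "EL \<le> (1 / (s * s)) * Es" using 3 s unfolding EL_def Es_def by simp
  have fin: "EL / N \<le> (2 * Lt * (SD / N) + 2 * sh) / s"
  proof -
    have "EL / N \<le> ((1 / (s * s)) * Es) / N" using 3 Npos by (intro divide_right_mono) auto
    also have "\<dots> \<le> ((1 / (s * s)) * (2 * s * Lt * SD + N * sh * (2 * s))) / N"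
      using 2 Npos s by (intro divide_right_mono mult_left_mono) auto
    also have "\<dots> = (2 * Lt * (SD / N) + 2 * sh) / s" using Npos s(1) by (simp add: field_simps)
    finally show ?thesis .
  qed
  show ?thesis
    using fin finSm Smne finBt Btne
    unfolding EL_def SD_def Dm_def sh_def sg_def fa_def X_def N_def Lt_def Ltil_def Sm_def Bt_def s_def
    by (simp add: E)
qed

end

theorem corollary2:
  fixes f :: "nat \<Rightarrow> 'a::euclidean_space \<Rightarrow> real" and g :: "nat \<Rightarrow> 'a \<Rightarrow> 'a"
    and L :: "nat \<Rightarrow> real" and ell :: "nat set \<Rightarrow> real"
    and n B K :: nat and gb :: real and x0 xs :: 'a
  assumes "1 \<le> B" and "B \<le> n"
    and grad: "\<And>i x. i < n \<Longrightarrow> (f i has_derivative (\<lambda>h. g i x \<bullet> h)) (at x)"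
    and conv: "\<And>i. i < n \<Longrightarrow> convex_on UNIV (f i)"
    and lb: "\<And>i. i < n \<Longrightarrow> bdd_below (range (f i))"
    and smooth: "\<And>i x y. i < n \<Longrightarrow> norm (g i x - g i y) \<le> L i * norm (x - y)"
    and opt: "\<And>x. favg f n xs \<le> favg f n x"
    and ell: "\<And>S. S \<in> batches n B \<Longrightarrow> ell S \<le> (INF x. fS f S x)"
    and "gb > 0" and "K \<ge> 1"
  shows "measure_pmf.expectation (pmf_of_set (samples n B K))
           (\<lambda>Ss. favg f n ((1 / real K) *\<^sub>R (\<Sum>k<K. iterate f g ell gb x0 Ss k)) - favg f n xs)
         \<le> (2 * max (Max (L ` {0..<n})) (1 / (2 * cdec 0 * gb))
              * measure_pmf.expectation (pmf_of_set (samples n B K))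
                  (\<lambda>Ss. Max ((\<lambda>k. (norm (iterate f g ell gb x0 Ss k - xs))\<^sup>2) ` {..<K}))
            + 2 * measure_pmf.expectation (pmf_of_set (batches n B)) (\<lambda>S. fS f S xs - ell S))
           / sqrt (real K)"
  by (rule main[OF assms])

end
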